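(* Both sequences $(S_m)_{m\ge0}$ and $(P_m)_{m\ge0}$ are log-convex, i.e. for each of them $a_m\ge0$ for all $m\ge0$ and $a_{m-1}a_{m+1}\ge a_m^2$ for all $m\ge1$.
   Context: $(S_n)_{n\ge0}$ is the integer sequence defined by $S_0=1$, $S_1=4$ and $(n+1)^2S_{n+1}=4(3n^2+3n+1)S_n-32n^2S_{n-1}$ for $n\ge1$; equivalently $S_n=\sum_{k=0}^n\binom nk\binom{2k}k\binom{2n-2k}{n-k}$. The Catalan–Larcombe–French numbers are $P_n=2^nS_n$ (equivalently $P_0=1$, $P_1=8$, $(n+1)^2P_{n+1}=8(3n^2+3n+1)P_n-128n^2P_{n-1}$ for $n\ge1$). *)

theory Defs
  imports Main
begin

definition S :: "nat \<Rightarrow> int" where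
  "S n = (\<Sum>k=0..n. int (n choose k) * int ((2*k) choose k) * int ((2*n-2*k) choose (n-k)))"

definition P :: "nat \<Rightarrow> int" where
  "P n = 2^n * S n"

definition log_convex :: "(nat \<Rightarrow> int) \<Rightarrow> bool" where
  "log_convex a \<longleftrightarrow> (\<forall>m. a m \<ge> 0) \<and> (\<forall>m\<ge>1. a (m-1) * a (m+1) \<ge> (a m)^2)"

end

theory Submission
  imports Defs Complex_Main
begin

definition A :: "nat \<Rightarrow> nat \<Rightarrow> real" where
  "A i j = fact (i+j) * fact (2*i) * fact (2*j) / (fact i ^ 3 * fact j ^ 3)"

lemma A_pos: "A i j > 0" unfolding A_def by simp

lemma A_SucL: "A (Suc i) j = A i j * (2*(real i+real j+1)*(2*real i+1)/(real i+1)^2)"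
proof -
  have e1: "fact (Suc i + j) = (real i + real j + 1) * (fact (i+j)::real)" by (simp add: algebra_simps)
  have e2: "fact (2 * Suc i) = (2*(real i+1))*(2*real i+1)* (fact (2*i)::real)"
    by (simp add: algebra_simps)
  have e3: "fact (Suc i) = (real i + 1) * (fact i :: real)" by (simp add: algebra_simps)
  have g: "\<And>a b c d e x z w :: real. d > 0 \<Longrightarrow> e > 0 \<Longrightarrow> z > 0 \<Longrightarrow>
     (x*a) * ((2*z)*w*b) * c / (((z*d))^3 * e^3) = a*b*c/(d^3*e^3) * (2*x*w/z^2)"
    by (simp add: field_simps power2_eq_square power3_eq_cube)
  show ?thesis unfolding A_def e1 e2 e3
    by (rule g) auto
qed

lemma A_sym: "A i j = A j i" unfolding A_def by (simp add: ac_simps)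

lemma A_SucR: "A i (Suc j) = A i j * (2*(real i+real j+1)*(2*real j+1)/(real j+1)^2)"
  using A_SucL[of j i] by (simp add: A_sym add.commute)

lemma A_00: "A 0 0 = 1" unfolding A_def by simp

lemma term_A: "k \<le> n \<Longrightarrow> real (n choose k) * real ((2*k) choose k) * real ((2*n-2*k) choose (n-k)) = A k (n-k)"
proof -
  assume kn: "k \<le> n"
  have h: "2*n-2*k = 2*(n-k)" by simp
  have b1: "real (n choose k) = fact n / (fact k * fact (n-k))" using kn by (rule binomial_fact)
  have b2: "real ((2*k) choose k) = fact (2*k) / (fact k * fact k)"
    using binomial_fact[of k "2*k", where 'a=real] by simp
  have b3: "real ((2*(n-k)) choose (n-k)) = fact (2*(n-k)) / (fact (n-k) * fact (n-k))"
    using binomial_fact[of "n-k" "2*(n-k)", where 'a=real] by simp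
  have n: "k + (n-k) = n" using kn by simp
  show ?thesis unfolding h b1 b2 b3 A_def n
    by (simp add: field_simps power3_eq_cube)
qed

definition pp :: "real \<Rightarrow> real \<Rightarrow> real" where
  "pp n k = 8*n*k^2 - (8*n^2+8*n-4)*k + 4*n^2+2*n-2"

lemma polyb:
  fixes x y n :: real
  assumes n: "n = x + y + 2"
  shows "(n+1)^2 * (8*(x+y+1)*(2*x+1)*(x+y+2)*(2*y+1)*(x+y+3)*(2*y+3)) * ((2*y+1)*(2*y+3))
   - 4*(3*n^2+3*n+1) * (4*(x+y+1)*(2*x+1)*(x+y+2)*(2*y+1)) * ((y+2)^2*(2*y+1)*(2*y+3))
   + 32*n^2 * (2*(x+y+1)*(2*x+1)) * ((y+1)^2*(y+2)^2*(2*y+1)*(2*y+3))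
   = (4*(x+y+1)*(2*x+1)*(x+y+2)*(2*y+1)) * (8*n*(x+2)^2 - (8*n^2+8*n-4)*(x+2) + 4*n^2+2*n-2) * ((y+2)^2*(2*y+3))
   - (4*(x+y+1)*(2*y+1)*(x+y+2)*(2*y+3)) * (8*n*(x+1)^2 - (8*n^2+8*n-4)*(x+1) + 4*n^2+2*n-2) * ((x+1)^2*(2*y+1))"
  unfolding n by algebra

lemma fh: "(E::real) \<noteq> 0 \<Longrightarrow> d \<noteq> 0 \<Longrightarrow> D = E*d*Q \<Longrightarrow> (b*N/E) * PP / d * D = b*(N*PP*Q)"
  by (simp add: field_simps)

lemma case_b:
  fixes i j :: nat
  defines "n \<equiv> real i + real j + 2"
  shows "(n+1)^2 * A (Suc i) (Suc (Suc j)) - 4*(3*n^2+3*n+1) * A (Suc i) (Suc j) + 32*n^2 * A (Suc i) j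
     = A (Suc i) (Suc j) * pp n (real i + 2) / (2*n - 2*(real i+2) + 1)
       - A i (Suc (Suc j)) * pp n (real i + 1) / (2*n - 2*(real i+1) + 1)"
proof -
  define x where "x = real i"
  define y where "y = real j"
  define b where "b = A i j"
  have n: "n = x + y + 2" unfolding n_def x_def y_def by simp
  have x: "x \<ge> 0" "y \<ge> 0" unfolding x_def y_def by auto
  have a3: "A (Suc i) j = b * (2*(x+y+1)*(2*x+1)) / (x+1)^2"
    unfolding A_SucL b_def x_def y_def by simp
  have a2: "A (Suc i) (Suc j) = b * (4*(x+y+1)*(2*x+1)*(x+y+2)*(2*y+1)) / ((x+1)^2*(y+1)^2)"
    unfolding A_SucR a3 by (simp add: x_def[symmetric] y_def[symmetric] field_simps)
  have a1: "A (Suc i) (Suc (Suc j)) = b * (8*(x+y+1)*(2*x+1)*(x+y+2)*(2*y+1)*(x+y+3)*(2*y+3)) / ((x+1)^2*(y+1)^2*(y+2)^2)"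
    unfolding A_SucR[of "Suc i" "Suc j"] a2 using x by (simp add: x_def[symmetric] y_def[symmetric] field_simps)
  have a5: "A i (Suc (Suc j)) = b * (4*(x+y+1)*(2*y+1)*(x+y+2)*(2*y+3)) / ((y+1)^2*(y+2)^2)"
    unfolding A_SucR b_def using x by (simp add: x_def[symmetric] y_def[symmetric] field_simps)
  have d1: "2*n - 2*(x+2) + 1 = 2*y+1" unfolding n by simp
  have d2: "2*n - 2*(x+1) + 1 = 2*y+3" unfolding n by simp
  have xi: "real i = x" by (simp add: x_def)
  define D where "D = (x+1)^2*(y+1)^2*(y+2)^2*(2*y+1)*(2*y+3)"
  have Dpos: "D > 0" unfolding D_def using x by (simp add: zero_less_mult_iff)
  have t1: "(n+1)^2 * A (Suc i) (Suc (Suc j)) * D = b * ((n+1)^2 * (8*(x+y+1)*(2*x+1)*(x+y+2)*(2*y+1)*(x+y+3)*(2*y+3)) * ((2*y+1)*(2*y+3)))"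
    unfolding a1 D_def using x by (simp add: field_simps)
  have t2: "4*(3*n^2+3*n+1) * A (Suc i) (Suc j) * D = b * (4*(3*n^2+3*n+1) * (4*(x+y+1)*(2*x+1)*(x+y+2)*(2*y+1)) * ((y+2)^2*(2*y+1)*(2*y+3)))"
    unfolding a2 D_def using x by (simp add: field_simps)
  have t3: "32*n^2 * A (Suc i) j * D = b * (32*n^2 * (2*(x+y+1)*(2*x+1)) * ((y+1)^2*(y+2)^2*(2*y+1)*(2*y+3)))"
    unfolding a3 D_def using x by (simp add: field_simps)
  have t4: "A (Suc i) (Suc j) * pp n (real i + 2) / (2*n - 2*(real i+2) + 1) * D = b * ((4*(x+y+1)*(2*x+1)*(x+y+2)*(2*y+1)) * (8*n*(x+2)^2 - (8*n^2+8*n-4)*(x+2) + 4*n^2+2*n-2) * ((y+2)^2*(2*y+3)))"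
    unfolding a2 xi pp_def unfolding d1 apply (rule fh) using x apply (simp, simp) unfolding D_def by algebra
  have t5: "A i (Suc (Suc j)) * pp n (real i + 1) / (2*n - 2*(real i+1) + 1) * D = b * ((4*(x+y+1)*(2*y+1)*(x+y+2)*(2*y+3)) * (8*n*(x+1)^2 - (8*n^2+8*n-4)*(x+1) + 4*n^2+2*n-2) * ((x+1)^2*(2*y+1)))"
    unfolding a5 xi pp_def unfolding d2 apply (rule fh) using x apply (simp, simp) unfolding D_def by algebra
  have "((n+1)^2 * A (Suc i) (Suc (Suc j)) - 4*(3*n^2+3*n+1) * A (Suc i) (Suc j) + 32*n^2 * A (Suc i) j) * D
     = (A (Suc i) (Suc j) * pp n (real i + 2) / (2*n - 2*(real i+2) + 1)
       - A i (Suc (Suc j)) * pp n (real i + 1) / (2*n - 2*(real i+1) + 1)) * D"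
    apply (simp only: left_diff_distrib distrib_right)
    unfolding t1 t2 t3 t4 t5
    using arg_cong[OF polyb[OF n], of "\<lambda>z. b*z"] by (simp only: right_diff_distrib distrib_left)
  then show ?thesis using Dpos by simp
qed

lemma canc: "(z::real) \<noteq> 0 \<Longrightarrow> b * (2*z*w/z^2) = b*(2*w/z)" by (simp add: power2_eq_square)

lemma h1: "(E::real) \<noteq> 0 \<Longrightarrow> F \<noteq> 0 \<Longrightarrow> D = E*F*Q \<Longrightarrow> c*(b*(PN/E)*(R/F))*D = b*(c*PN*R*Q)"
  by (simp add: field_simps)
lemma h2: "(E::real) \<noteq> 0 \<Longrightarrow> D = E*Q \<Longrightarrow> c*(b*(PN/E))*D = b*(c*PN*Q)"
  by (simp add: field_simps)
lemma h3: "(E::real) \<noteq> 0 \<Longrightarrow> d \<noteq> 0 \<Longrightarrow> D = E*d*Q \<Longrightarrow> b*(PN/E)*PP/d*D = b*(PN*PP*Q)"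
  by (simp add: field_simps)
lemma h4: "(E::real) \<noteq> 0 \<Longrightarrow> D = E*Q \<Longrightarrow> c*(b*(PN/E)*R)*D = b*(c*PN*R*Q)"
  by (simp add: field_simps)

lemma case_a:
  fixes N :: nat
  defines "n \<equiv> real N + 1"
  shows "(n+1)^2 * A 0 (Suc (Suc N)) - 4*(3*n^2+3*n+1) * A 0 (Suc N) + 32*n^2 * A 0 N
     = A 0 (Suc N) * pp n 1 / (2*n - 2*1 + 1)"
proof -
  define y where "y = real N"
  define b where "b = A 0 N"
  have y: "y \<ge> 0" unfolding y_def by auto
  have yp: "y+1 \<noteq> 0" "y+2 \<noteq> 0" "2*y+1 \<noteq> 0" using y by auto
  have n: "n = y + 1" unfolding n_def y_def by simp
  have a1: "A 0 (Suc N) = b * (2*(2*y+1)/(y+1))"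
    using A_SucR[of 0 N] canc[of "y+1" b "2*y+1"] yp by (simp add: y_def b_def)
  have a2: "A 0 (Suc (Suc N)) = b * (2*(2*y+1)/(y+1)) * (2*(2*y+3)/(y+2))"
    using A_SucR[of 0 "Suc N"] canc[of "y+2" "b * (2*(2*y+1)/(y+1))" "2*y+3"] yp
    unfolding a1 by (simp add: y_def[symmetric] algebra_simps)
  have d: "2*n - 2*1 + 1 = 2*y+1" unfolding n by simp
  define D where "D = (y+1)*(y+2)*(2*y+1)"
  have Dpos: "D > 0" unfolding D_def using y by simp
  have t1: "(n+1)^2 * A 0 (Suc (Suc N)) * D = b*((n+1)^2*(2*(2*y+1))*(2*(2*y+3))*(2*y+1))"
    unfolding a2 by (rule h1) (use yp in \<open>simp_all add: D_def\<close>)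
  have t2: "4*(3*n^2+3*n+1) * A 0 (Suc N) * D = b*(4*(3*n^2+3*n+1)*(2*(2*y+1))*((y+2)*(2*y+1)))"
    unfolding a1 by (rule h2) (use yp in \<open>simp_all add: D_def\<close>)
  have t3: "32*n^2 * A 0 N * D = b*(32*n^2*((y+1)*(y+2)*(2*y+1)))"
    unfolding D_def b_def by simp
  have t4: "A 0 (Suc N) * pp n 1 / (2*n - 2*1 + 1) * D = b*((2*(2*y+1))*pp n 1*(y+2))"
    unfolding a1 d by (rule h3) (use yp in \<open>simp_all add: D_def\<close>)
  have poly: "(n+1)^2*(2*(2*y+1))*(2*(2*y+3))*(2*y+1) - 4*(3*n^2+3*n+1)*(2*(2*y+1))*((y+2)*(2*y+1))
     + 32*n^2*((y+1)*(y+2)*(2*y+1)) = (2*(2*y+1))*pp n 1*(y+2)"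
    unfolding n pp_def by (simp add: power2_eq_square algebra_simps)
  have "((n+1)^2 * A 0 (Suc (Suc N)) - 4*(3*n^2+3*n+1) * A 0 (Suc N) + 32*n^2 * A 0 N) * D
     = (A 0 (Suc N) * pp n 1 / (2*n - 2*1 + 1)) * D"
    apply (simp only: left_diff_distrib distrib_right)
    unfolding t1 t2 t3 t4
    using arg_cong[OF poly, of "\<lambda>z. b*z"] by (simp only: right_diff_distrib distrib_left)
  then show ?thesis using Dpos by (subst (asm) mult_cancel_right) simp
qed

lemma case_c:
  fixes N :: nat
  defines "n \<equiv> real N + 1"
  shows "(n+1)^2 * A (Suc N) 1 - 4*(3*n^2+3*n+1) * A (Suc N) 0 + 32*n^2 * 0
     = A (Suc N) 0 * pp n (n+1) / (2*n - 2*(n+1) + 1) - A N 1 * pp n n / (2*n - 2*n + 1)"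
proof -
  define x where "x = real N"
  define b where "b = A N 0"
  have x: "x \<ge> 0" unfolding x_def by auto
  have xp: "x+1 \<noteq> 0" using x by auto
  have n: "n = x + 1" unfolding n_def x_def by simp
  have a1: "A (Suc N) 0 = b * (2*(2*x+1)/(x+1))"
    using A_SucL[of N 0] canc[of "x+1" b "2*x+1"] xp by (simp add: x_def b_def)
  have a2: "A (Suc N) 1 = b * (2*(2*x+1)/(x+1)) * (2*(x+2))"
    using A_SucR[of "Suc N" 0] a1 by (simp add: x_def)
  have a3: "A N 1 = b * (2*(x+1))"
    using A_SucR[of N 0] by (simp add: x_def b_def)
  have d1: "2*n - 2*(n+1) + 1 = -1" by simp
  have d2: "2*n - 2*n + 1 = 1" by simp
  define D where "D = x+1"
  have Dpos: "D > 0" unfolding D_def using x by simp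
  have t1: "(n+1)^2 * A (Suc N) 1 * D = b*((n+1)^2*(2*(2*x+1))*(2*(x+2))*1)"
    unfolding a2 by (rule h4) (use xp in \<open>simp_all add: D_def\<close>)
  have t2: "4*(3*n^2+3*n+1) * A (Suc N) 0 * D = b*(4*(3*n^2+3*n+1)*(2*(2*x+1))*1)"
    unfolding a1 by (rule h2) (use xp in \<open>simp_all add: D_def\<close>)
  have t4: "A (Suc N) 0 * pp n (n+1) / (2*n - 2*(n+1) + 1) * D = b*((2*(2*x+1))*pp n (n+1)*(-1))"
    unfolding a1 d1 by (rule h3) (use xp in \<open>simp_all add: D_def\<close>)
  have t5: "A N 1 * pp n n / (2*n - 2*n + 1) * D = b*((2*(x+1))*pp n n*(x+1))"
    unfolding a3 d2 D_def by simp
  have poly: "(n+1)^2*(2*(2*x+1))*(2*(x+2))*1 - 4*(3*n^2+3*n+1)*(2*(2*x+1))*1 + 0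
     = (2*(2*x+1))*pp n (n+1)*(-1) - (2*(x+1))*pp n n*(x+1)"
    unfolding n pp_def by algebra
  have "((n+1)^2 * A (Suc N) 1 - 4*(3*n^2+3*n+1) * A (Suc N) 0 + 32*n^2 * 0) * D
     = (A (Suc N) 0 * pp n (n+1) / (2*n - 2*(n+1) + 1) - A N 1 * pp n n / (2*n - 2*n + 1)) * D"
    apply (simp only: left_diff_distrib distrib_right)
    unfolding t1 t2 t4 t5
    using arg_cong[OF poly, of "\<lambda>z. b*z"] by (simp only: right_diff_distrib distrib_left mult_zero_right mult_zero_left)
  then show ?thesis using Dpos by simp
qed

lemma case_d:
  fixes n :: nat
  shows "(real n+1)^2 * A (Suc n) 0 - 4*(3*real n^2+3*real n+1) * 0 + 32*real n^2 * 0
     = 0 - A n 0 * pp n (real n+1) / (2*real n - 2*(real n+1) + 1)"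
proof -
  define x where "x = real n"
  define b where "b = A n 0"
  have x: "x \<ge> 0" unfolding x_def by auto
  have xp: "x+1 \<noteq> 0" "x+2 \<noteq> 0" "(x+1)^2 \<noteq> 0" using x by auto
  have a1: "A (Suc n) 0 = b * (2*(x+1)*(2*x+1)/(x+1)^2)" unfolding A_SucL b_def x_def by simp
  show ?thesis unfolding a1 x_def[symmetric] b_def[symmetric] pp_def using x xp
    by (simp add: field_simps power2_eq_square)
qed

definition T :: "nat \<Rightarrow> nat \<Rightarrow> real" where
  "T n k = (if k \<le> n then A k (n-k) else 0)"

definition G :: "nat \<Rightarrow> nat \<Rightarrow> real" where
  "G n k = (if k = 0 \<or> n+1 < k then 0 else T n (k-1) * pp (real n) (real k) / (2*real n - 2*real k + 1))"

lemma pointwise: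
  assumes "k \<le> Suc N + 1"
  shows "(real (Suc N)+1)^2 * T (Suc N + 1) k - 4*(3*real (Suc N)^2+3*real (Suc N)+1) * T (Suc N) k
     + 32*real (Suc N)^2 * T N k = G (Suc N) (Suc k) - G (Suc N) k"
proof -
  consider "k = 0" | "k = Suc N" | "k = Suc N + 1" | i j where "k = Suc i" "Suc N = i + j + 2"
  proof (cases k)
    case 0 then show ?thesis using that by simp
  next
    case (Suc i)
    show ?thesis
    proof (cases "i < N")
      case True
      then have "Suc N = i + (N - i - 1) + 2" by simp
      then show ?thesis using that(4) Suc by blast
    next
      case False
      then have "i = N \<or> i = Suc N" using assms Suc by auto
      then show ?thesis using that Suc by auto
    qed
  qed
  then show ?thesis
  proof cases
    case 1
    then show ?thesis using case_a[of N] by (simp add: T_def G_def add.commute)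
  next
    case 2
    then show ?thesis using case_c[of N] by (simp add: T_def G_def add.commute)
  next
    case 3
    then show ?thesis using case_d[of "Suc N"] by (simp add: T_def G_def)
  next
    case 4
    then show ?thesis using case_b[of i j] by (simp add: T_def G_def add.commute add.left_commute)
  qed
qed

lemma S_real: "real_of_int (S n) = (\<Sum>k=0..n. T n k)"
  unfolding S_def of_int_sum
  by (rule sum.cong) (auto simp: T_def term_A[symmetric])

lemma S_real': "n \<le> m \<Longrightarrow> real_of_int (S n) = (\<Sum>k=0..m. T n k)"
  unfolding S_real by (rule sum.mono_neutral_left) (auto simp: T_def)

lemma rec_real:
  fixes N :: nat
  shows "(real (Suc N)+1)^2 * real_of_int (S (Suc N + 1)) - 4*(3*real (Suc N)^2+3*real (Suc N)+1) * real_of_int (S (Suc N))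
     + 32*real (Suc N)^2 * real_of_int (S N) = 0"
proof -
  let ?n = "Suc N"
  have "(\<Sum>k=0..?n+1. (real ?n+1)^2 * T (?n + 1) k - 4*(3*real ?n^2+3*real ?n+1) * T ?n k
     + 32*real ?n^2 * T N k) = (\<Sum>k=0..?n+1. G ?n (Suc k) - G ?n k)"
    by (rule sum.cong[OF refl], rule pointwise) simp
  also have "\<dots> = G ?n (Suc (?n+1)) - G ?n 0" by (rule sum_Suc_diff) simp
  also have "\<dots> = 0" by (simp add: G_def)
  finally have "(\<Sum>k=0..?n+1. (real ?n+1)^2 * T (?n + 1) k - 4*(3*real ?n^2+3*real ?n+1) * T ?n k
     + 32*real ?n^2 * T N k) = 0" .
  moreover have "(\<Sum>k=0..?n+1. (real ?n+1)^2 * T (?n + 1) k - 4*(3*real ?n^2+3*real ?n+1) * T ?n k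
     + 32*real ?n^2 * T N k) = (real ?n+1)^2 * (\<Sum>k=0..?n+1. T (?n + 1) k) - 4*(3*real ?n^2+3*real ?n+1) * (\<Sum>k=0..?n+1. T ?n k)
     + 32*real ?n^2 * (\<Sum>k=0..?n+1. T N k)"
    by (simp only: sum.distrib sum_subtractf sum_distrib_left)
  moreover have "real_of_int (S (?n+1)) = (\<Sum>k=0..?n+1. T (?n + 1) k)" by (rule S_real') simp
  moreover have "real_of_int (S ?n) = (\<Sum>k=0..?n+1. T ?n k)" by (rule S_real') simp
  moreover have "real_of_int (S N) = (\<Sum>k=0..?n+1. T N k)" by (rule S_real') simp
  ultimately show ?thesis by simp
qed

lemma rec_int:
  "(int n + 2)^2 * S (n+2) = 4*(3*(int n+1)^2+3*(int n+1)+1) * S (n+1) - 32*(int n+1)^2 * S n"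
proof -
  have "real_of_int ((int n + 2)^2 * S (n+2)) = real_of_int (4*(3*(int n+1)^2+3*(int n+1)+1) * S (n+1) - 32*(int n+1)^2 * S n)"
    using rec_real[of n] by (simp add: algebra_simps)
  then show ?thesis by (simp only: of_int_eq_iff)
qed

lemma S01: "S 0 = 1" "S 1 = 4" unfolding S_def by simp_all

lemma S_vals: "S 2 = 20" "S 3 = 112" "S 4 = 676" "S 5 = 4304"
proof -
  have r: "\<And>n. (int n + 2)^2 * S (n+2) = 4*(3*(int n+1)^2+3*(int n+1)+1) * S (n+1) - 32*(int n+1)^2 * S n"
    by (rule rec_int)
  have 2: "S 2 = 20" using r[of 0] S01 by (simp add: eval_nat_numeral)
  have 3: "S 3 = 112" using r[of 1] S01 2 by (simp add: eval_nat_numeral)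
  have 4: "S 4 = 676" using r[of 2] 2 3 by (simp add: eval_nat_numeral)
  have 5: "S 5 = 4304" using r[of 3] 3 4 by (simp add: eval_nat_numeral)
  show "S 2 = 20" "S 3 = 112" "S 4 = 676" "S 5 = 4304" using 2 3 4 5 .
qed

lemma S_pos: "0 < S n \<and> 4 * S n \<le> S (n+1)"
proof (induction n)
  case 0 then show ?case using S01 by simp
next
  case (Suc n)
  define k where "k = int n"
  define a where "a = S n"
  define b where "b = S (n+1)"
  define c where "c = S (n+2)"
  have k: "k \<ge> 0" unfolding k_def by simp
  have ha: "0 < a" "4*a \<le> b" using Suc unfolding a_def b_def by auto
  have r: "(k + 2)^2 * c = 4*(3*(k+1)^2+3*(k+1)+1) * b - 32*(k+1)^2 * a"
    unfolding k_def a_def b_def c_def by (rule rec_int)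
  have m: "8*(k+1)^2*(4*a) \<le> 8*(k+1)^2*b" using ha(2) by (intro mult_left_mono) auto
  have e: "(k+2)^2 * (c - 4*b) = (4*k+4)*b + (8*(k+1)^2*b - 8*(k+1)^2*(4*a))"
    using r by algebra
  have "(4*k+4)*b \<ge> 0" using k ha by simp
  then have "(k+2)^2 * (c - 4*b) \<ge> 0" using e m by linarith
  then have "c - 4*b \<ge> 0" using k by (simp add: zero_le_mult_iff)
  then show ?case using ha unfolding b_def c_def by auto
qed

lemma S_ub: "n \<ge> 4 \<Longrightarrow> (int n+1) * S (n+1) \<le> 8 * int n * S n"
proof (induction n rule: nat_induct_at_least)
  case base then show ?case using S_vals by simp
next
  case (Suc n)
  define k where "k = int n"
  define a where "a = S n"
  define b where "b = S (n+1)"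
  define c where "c = S (n+2)"
  have k: "k \<ge> 4" unfolding k_def using Suc by simp
  have hb: "b \<ge> 0" unfolding b_def using S_pos[of "n+1"] by simp
  have hyp: "(k+1)*b \<le> 8*k*a" using Suc unfolding k_def a_def b_def by simp
  have r: "(k + 2)^2 * c = 4*(3*(k+1)^2+3*(k+1)+1) * b - 32*(k+1)^2 * a"
    unfolding k_def a_def b_def c_def by (rule rec_int)
  have m: "4*(k+1)^2*((k+1)*b) \<le> 4*(k+1)^2*(8*k*a)" using hyp by (intro mult_left_mono) auto
  have e: "k*(k+2)*((k+2)*c - 8*(k+1)*b) = -4*b - (4*(k+1)^2*(8*k*a) - 4*(k+1)^2*((k+1)*b))"
    using r by algebra
  have "k*(k+2)*((k+2)*c - 8*(k+1)*b) \<le> 0" using e m hb by linarith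
  then have "(k+2)*c - 8*(k+1)*b \<le> 0" using k by (simp add: mult_le_0_iff)
  then show ?case unfolding k_def b_def c_def by (simp add: algebra_simps)
qed

lemma S_lc: "S (n+1)^2 \<le> S n * S (n+2)"
proof (cases "n \<le> 3")
  case True
  then have "n = 0 \<or> n = 1 \<or> n = 2 \<or> n = 3" by auto
  then show ?thesis using S01 S_vals by (auto simp: eval_nat_numeral)
next
  case False
  define k where "k = int n + 1"
  define a where "a = S n"
  define b where "b = S (n+1)"
  define c where "c = S (n+2)"
  have k: "k \<ge> 5" unfolding k_def using False by simp
  have t: "b - 4*a \<ge> 0" using S_pos[of n] unfolding a_def b_def by simp
  have w: "8*(k-1)*a - k*b \<ge> 0" using S_ub[of n] False unfolding a_def b_def k_def by (simp add: algebra_simps)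
  have r: "(k + 1)^2 * c = 4*(3*k^2+3*k+1) * b - 32*k^2 * a"
    using rec_int[of n] unfolding k_def a_def b_def c_def by (simp add: algebra_simps)
  have e: "(4*k-8)^2 * (k+1)^2 * (a*c - b^2) =
     -((-64*k^2+32*k+64)*(b-4*a)^2 + (-16*k^3+16*k^2-16*k-32)*(b-4*a)*(8*(k-1)*a - k*b)
       + (-16*k)*(8*(k-1)*a - k*b)^2)"
    using r by algebra
  have kk: "5*k \<le> k*k" using k by (intro mult_right_mono) auto
  have kk2: "64*k^2-32*k-64 \<ge> 0" using kk k unfolding power2_eq_square by linarith
  have p1: "(64*k^2-32*k-64)*(b-4*a)^2 \<ge> 0" using kk2 by (intro mult_nonneg_nonneg) auto
  have p2: "(16*k^3-16*k^2+16*k+32)*((b-4*a)*(8*(k-1)*a - k*b)) \<ge> 0"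
    using k t w by (intro mult_nonneg_nonneg) (auto simp: power3_eq_cube power2_eq_square)
  have p3: "(16*k)*(8*(k-1)*a - k*b)^2 \<ge> 0" using k by simp
  have "(4*k-8)^2 * (k+1)^2 * (a*c - b^2) \<ge> 0" unfolding e using p1 p2 p3
    by (simp add: algebra_simps)
  then have q: "(4*k-8)^2 * (k+1)^2 * 0 \<le> (4*k-8)^2 * (k+1)^2 * (a*c - b^2)" by simp
  have pos: "(4*k-8)^2 * (k+1)^2 > 0" using k by simp
  have "0 \<le> a*c - b^2" using q by (simp only: mult_le_cancel_left_pos[OF pos])
  then show ?thesis unfolding a_def b_def c_def by simp
qed

theorem corollary4p1:
  shows "log_convex S \<and> log_convex P"
proof -
  have S0: "\<And>m. S m \<ge> 0" using S_pos by (simp add: less_imp_le)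
  have SL: "\<And>m. m \<ge> 1 \<Longrightarrow> S (m-1) * S (m+1) \<ge> (S m)^2"
  proof -
    fix m :: nat assume "m \<ge> 1"
    then obtain n where "m = n + 1" by (metis add.commute le_add_diff_inverse)
    then show "S (m-1) * S (m+1) \<ge> (S m)^2" using S_lc[of n] by (simp add: add.assoc)
  qed
  have "log_convex S" unfolding log_convex_def using S0 SL by auto
  moreover have "log_convex P" unfolding log_convex_def P_def
  proof (intro conjI allI impI)
    fix m :: nat show "0 \<le> 2^m * S m" using S0[of m] by simp
  next
    fix m :: nat assume m: "1 \<le> m"
    have pw: "(2::int)^(m-1) * 2^(m+1) = (2^m)^2" using m
      by (cases m) (simp_all add: power2_eq_square algebra_simps)
    have "(2^m * S m)^2 = 2^(m-1) * 2^(m+1) * (S m)^2"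
      unfolding pw by (simp add: power_mult_distrib)
    also have "\<dots> \<le> 2^(m-1) * 2^(m+1) * (S (m-1) * S (m+1))"
      using SL[OF m] by (intro mult_left_mono) auto
    also have "\<dots> = 2 ^ (m - 1) * S (m - 1) * (2 ^ (m + 1) * S (m + 1))" by (simp add: ac_simps)
    finally show "(2 ^ m * S m)\<^sup>2 \<le> 2 ^ (m - 1) * S (m - 1) * (2 ^ (m + 1) * S (m + 1))" .
  qed
  ultimately show ?thesis by simp
qed
end
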